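(* Let $\mathcal{A}$ be a pOC with state set $Q$ whose underlying chain $\mathcal{X}$ is strongly connected, with trend $t$, and let $v\in\mathbb{R}^Q$ be any potential. Fix an initial configuration $r(c)$. For runs $w$ of $\mathcal{M}_\mathcal{A}$ starting in $r(c)$, let $p^{(i)}(w)$ and $c^{(i)}(w)$ be the control state and counter value of $w(i)$. Define $$m^{(i)}=\begin{cases}c^{(i)}+v_{p^{(i)}}-i t & \text{if } c^{(j)}\ge1 \text{ for all } 0\le j<i,\\ m^{(i-1)} & \text{otherwise.}\end{cases}$$ Then $m^{(0)},m^{(1)},\dots$ is a martingale.
   Context: A pOC is $\mathcal{A}=(Q,\delta^{=0},\delta^{>0},P^{=0},P^{>0})$ with the following components. - $\delta^{>0}\subseteq Q\times\{-1,0,1\}\times Q$ are the positive rules and $\delta^{=0}\subseteq Q\times\{0,1\}\times Q$ are the zero rules. Every state has both kinds of outgoing rule. - $P^{>0}$ and $P^{=0}$ are positive probability distributions over the outgoing rules of each state. $\mathcal{M}_\mathcal{A}$ is the Markov chain on configurations $p(i)$ with the following transitions: - $p(0)\to q(c)$ with probability $P^{=0}(p,c,q)$; - for $i\ge1$, $p(i)\to q(i+c)$ with probability $P^{>0}(p,c,q)$. $\mathcal{X}$ is the finite Markov chain on $Q$ with transition matrix $A_{pq}=\sum_cP^{>0}(p,c,q)$. $\alpha$ is its invariant distribution, $s_p=\sum_{(p,c,q)\in\delta^{>0}}P^{>0}(p,c,q)c$, and the trend is $t=\alpha s$. A potential is a vector $v$ with $s+Av=v+\mathbf{1}t$. *)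

theory Defs
  imports "HOL-Probability.Probability"
begin

text \<open>
  The rules and their probabilities are encoded by
  functions Ppos, P0 :: 'q => int => 'q => real: (p,c,q) is a positive (resp. zero) rule iff
  Ppos p c q > 0 (resp. P0 p c q > 0). A configuration p(i) is the pair (p, i) :: 'q * nat.
\<close>

definition is_pOC :: "('q::finite \<Rightarrow> int \<Rightarrow> 'q \<Rightarrow> real) \<Rightarrow> ('q \<Rightarrow> int \<Rightarrow> 'q \<Rightarrow> real) \<Rightarrow> bool" where
  "is_pOC P0 Ppos \<longleftrightarrow>
     (\<forall>p c q. 0 \<le> Ppos p c q \<and> 0 \<le> P0 p c q) \<and>
     (\<forall>p c q. Ppos p c q \<noteq> 0 \<longrightarrow> c \<in> {-1, 0, 1}) \<and>
     (\<forall>p c q. P0 p c q \<noteq> 0 \<longrightarrow> c \<in> {0, 1}) \<and>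
     (\<forall>p. (\<Sum>c\<in>{-1,0,1}. \<Sum>q\<in>UNIV. Ppos p c q) = 1) \<and>
     (\<forall>p. (\<Sum>c\<in>{0,1}. \<Sum>q\<in>UNIV. P0 p c q) = 1)"

definition trans_matrix :: "('q::finite \<Rightarrow> int \<Rightarrow> 'q \<Rightarrow> real) \<Rightarrow> 'q \<Rightarrow> 'q \<Rightarrow> real" where
  "trans_matrix Ppos p q = (\<Sum>c\<in>{-1,0,1}. Ppos p c q)"

definition strongly_connected :: "('q::finite \<Rightarrow> 'q \<Rightarrow> real) \<Rightarrow> bool" where
  "strongly_connected A \<longleftrightarrow> (\<forall>p q. (p, q) \<in> {(x, y). A x y > 0}\<^sup>*)"

definition invariant_distribution :: "('q::finite \<Rightarrow> 'q \<Rightarrow> real) \<Rightarrow> ('q \<Rightarrow> real) \<Rightarrow> bool" where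
  "invariant_distribution A \<alpha> \<longleftrightarrow>
     (\<forall>p. 0 \<le> \<alpha> p) \<and> (\<Sum>p\<in>UNIV. \<alpha> p) = 1 \<and> (\<forall>q. (\<Sum>p\<in>UNIV. \<alpha> p * A p q) = \<alpha> q)"

definition drift :: "('q::finite \<Rightarrow> int \<Rightarrow> 'q \<Rightarrow> real) \<Rightarrow> 'q \<Rightarrow> real" where
  "drift Ppos p = (\<Sum>c\<in>{-1,0,1}. \<Sum>q\<in>UNIV. Ppos p c q * real_of_int c)"

definition trend :: "('q::finite \<Rightarrow> int \<Rightarrow> 'q \<Rightarrow> real) \<Rightarrow> ('q \<Rightarrow> real) \<Rightarrow> real" where
  "trend Ppos \<alpha> = (\<Sum>p\<in>UNIV. \<alpha> p * drift Ppos p)"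

definition is_potential :: "('q::finite \<Rightarrow> int \<Rightarrow> 'q \<Rightarrow> real) \<Rightarrow> real \<Rightarrow> ('q \<Rightarrow> real) \<Rightarrow> bool" where
  "is_potential Ppos t v \<longleftrightarrow>
     (\<forall>p. drift Ppos p + (\<Sum>q\<in>UNIV. trans_matrix Ppos p q * v q) = v p + t)"

definition step_prob :: "('q \<Rightarrow> int \<Rightarrow> 'q \<Rightarrow> real) \<Rightarrow> ('q \<Rightarrow> int \<Rightarrow> 'q \<Rightarrow> real)
    \<Rightarrow> 'q \<times> nat \<Rightarrow> 'q \<times> nat \<Rightarrow> real" where
  "step_prob P0 Ppos x y =
     (if snd x = 0 then P0 (fst x) (int (snd y)) (fst y)
      else Ppos (fst x) (int (snd y) - int (snd x)) (fst y))"

definition run_kernel :: "('q \<Rightarrow> int \<Rightarrow> 'q \<Rightarrow> real) \<Rightarrow> ('q \<Rightarrow> int \<Rightarrow> 'q \<Rightarrow> real) \<Rightarrow> 'q \<times> nat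
    \<Rightarrow> nat \<Rightarrow> (nat \<Rightarrow> 'q \<times> nat) \<Rightarrow> ('q \<times> nat) measure" where
  "run_kernel P0 Ppos x0 i \<omega> =
     (if i = 0 then return (count_space UNIV) x0
      else density (count_space UNIV) (\<lambda>y. ennreal (step_prob P0 Ppos (\<omega> (i - 1)) y)))"

definition run_measure :: "('q \<Rightarrow> int \<Rightarrow> 'q \<Rightarrow> real) \<Rightarrow> ('q \<Rightarrow> int \<Rightarrow> 'q \<Rightarrow> real) \<Rightarrow> 'q \<times> nat
    \<Rightarrow> (nat \<Rightarrow> 'q \<times> nat) measure" where
  "run_measure P0 Ppos x0 =
     projective_family.lim UNIV
       (Ionescu_Tulcea.CI (run_kernel P0 Ppos x0) (\<lambda>_. count_space UNIV))
       (\<lambda>_. count_space UNIV)"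

definition run_filtration :: "(nat \<Rightarrow> 'q \<times> nat) measure \<Rightarrow> nat \<Rightarrow> (nat \<Rightarrow> 'q \<times> nat) measure" where
  "run_filtration R n =
     vimage_algebra (space R) (\<lambda>w. restrict w {0..n}) (PiM {0..n} (\<lambda>_. count_space UNIV))"

definition martingale :: "'a measure \<Rightarrow> (nat \<Rightarrow> 'a measure) \<Rightarrow> (nat \<Rightarrow> 'a \<Rightarrow> real) \<Rightarrow> bool" where
  "martingale M F X \<longleftrightarrow>
     (\<forall>n. subalgebra M (F n)) \<and> (\<forall>n. sets (F n) \<subseteq> sets (F (Suc n))) \<and>
     (\<forall>n. X n \<in> borel_measurable (F n)) \<and>
     (\<forall>n. integrable M (X n)) \<and>
     (\<forall>n. AE w in M. real_cond_exp M (F n) (X (Suc n)) w = X n w)"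

fun m_proc :: "('q \<Rightarrow> real) \<Rightarrow> real \<Rightarrow> nat \<Rightarrow> (nat \<Rightarrow> 'q \<times> nat) \<Rightarrow> real" where
  "m_proc v t 0 w = real (snd (w 0)) + v (fst (w 0))"
| "m_proc v t (Suc i) w =
     (if \<forall>j\<le>i. 1 \<le> snd (w j)
      then real (snd (w (Suc i))) + v (fst (w (Suc i))) - real (Suc i) * t
      else m_proc v t i w)"

end

theory Submission
  imports Defs
begin

lemma sets_PiM_count_finite:
  fixes J :: "nat set"
  assumes J: "finite J"
  shows "sets (PiM J (\<lambda>_. count_space (UNIV::'a::countable set))) = sets (count_space (PiE J (\<lambda>_. UNIV)))"
proof (rule antisym)
  show "sets (PiM J (\<lambda>_. count_space (UNIV::'a set))) \<subseteq> sets (count_space (PiE J (\<lambda>_. UNIV)))"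
    using sets.sets_into_space by (fastforce simp: space_PiM)
next
  show "sets (count_space (PiE J (\<lambda>_. UNIV))) \<subseteq> sets (PiM J (\<lambda>_. count_space (UNIV::'a set)))"
  proof
    fix X assume "X \<in> sets (count_space (PiE J (\<lambda>_. (UNIV::'a set))))"
    then have X: "X \<subseteq> PiE J (\<lambda>_. UNIV)" by simp
    have cX: "countable X"
      using countable_subset[OF X countable_PiE[OF J]] by auto
    have eq: "X = (\<Union>\<omega>\<in>X. PiE J (\<lambda>j. {\<omega> j}))"
    proof (rule set_eqI, rule iffI)
      fix x assume "x \<in> X" then show "x \<in> (\<Union>\<omega>\<in>X. PiE J (\<lambda>j. {\<omega> j}))"
        using X by (auto intro!: bexI[of _ x] simp: PiE_iff)
    next
      fix x assume "x \<in> (\<Union>\<omega>\<in>X. PiE J (\<lambda>j. {\<omega> j}))"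
      then obtain \<omega> where "\<omega> \<in> X" "x \<in> PiE J (\<lambda>j. {\<omega> j})" by auto
      have om: "\<omega> \<in> PiE J (\<lambda>_. UNIV)" using X \<open>\<omega> \<in> X\<close> by auto
      have xx: "x \<in> PiE J (\<lambda>_. UNIV)" using \<open>x \<in> PiE J (\<lambda>j. {\<omega> j})\<close> by (auto simp: PiE_iff)
      have "x = \<omega>" by (rule PiE_ext[OF xx om]) (use \<open>x \<in> PiE J (\<lambda>j. {\<omega> j})\<close> in auto)
      then show "x \<in> X" using \<open>\<omega> \<in> X\<close> by simp
    qed
    have "(\<Union>\<omega>\<in>X. PiE J (\<lambda>j. {\<omega> j})) \<in> sets (PiM J (\<lambda>_. count_space (UNIV::'a set)))"
      by (intro sets.countable_UN'' cX sets_PiM_I_finite J) auto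
    then show "X \<in> sets (PiM J (\<lambda>_. count_space (UNIV::'a set)))" using eq by simp
  qed
qed

lemma measurable_PiM_count_finite:
  fixes J :: "nat set"
  assumes J: "finite J" and f: "f \<in> PiE J (\<lambda>_. UNIV) \<rightarrow> space N"
  shows "f \<in> measurable (PiM J (\<lambda>_. count_space (UNIV::'a::countable set))) N"
proof -
  have "f \<in> measurable (count_space (PiE J (\<lambda>_. UNIV::'a set))) N" using f by simp
  then show ?thesis
    using measurable_cong_sets[OF sets_PiM_count_finite[OF J, where 'a='a] refl, of N] by simp
qed

lemma borel_PiM_count_finite[measurable]:
  fixes J :: "nat set" and f :: "(nat \<Rightarrow> 'a::countable) \<Rightarrow> real"
  assumes J: "finite J"
  shows "f \<in> borel_measurable (PiM J (\<lambda>_. count_space UNIV))"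
  by (rule measurable_PiM_count_finite[OF J]) auto

lemma pred_PiM_count_finite:
  fixes J :: "nat set" and Q :: "(nat \<Rightarrow> 'a::countable) \<Rightarrow> bool"
  assumes J: "finite J"
  shows "Measurable.pred (PiM J (\<lambda>_. count_space UNIV)) Q"
  by (rule measurable_PiM_count_finite[OF J]) auto

lemma set_PiM_count_finite:
  fixes J :: "nat set" and Q :: "(nat \<Rightarrow> 'a::countable) \<Rightarrow> bool"
  assumes J: "finite J"
  shows "{x \<in> space (PiM J (\<lambda>_. count_space UNIV)). Q x} \<in> sets (PiM J (\<lambda>_. count_space UNIV))"
  using sets_PiM_count_finite[OF J, where 'a='a] by (auto simp: space_PiM)

lemma integral_count_space_superset:
  fixes f :: "'a \<Rightarrow> real"
  assumes S: "finite S" and z: "\<And>y. y \<notin> S \<Longrightarrow> f y = 0"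
  shows "integral\<^sup>L (count_space UNIV) f = sum f S"
proof -
  have "{a\<in>UNIV. f a \<noteq> 0} \<subseteq> S" using z by auto
  then have fin: "finite {a\<in>UNIV. f a \<noteq> 0}" using S finite_subset by blast
  have "integral\<^sup>L (count_space UNIV) f = (\<Sum>a | a \<in> UNIV \<and> f a \<noteq> 0. f a)"
    by (rule lebesgue_integral_count_space_finite_support[OF fin])
  also have "\<dots> = sum f S"
    using \<open>{a\<in>UNIV. f a \<noteq> 0} \<subseteq> S\<close> S by (intro sum.mono_neutral_left) auto
  finally show ?thesis .
qed

lemma m_proc_restrict: "{0..n} \<subseteq> S \<Longrightarrow> m_proc v t n (restrict w S) = m_proc v t n w"
proof (induction n)
  case 0 then show ?case by simp
next
  case (Suc n)
  then have "{0..n} \<subseteq> S" by auto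
  then show ?case using Suc by (auto simp: subset_iff)
qed

lemma m_proc_active: "(\<forall>j<n. 1 \<le> snd (w j)) \<Longrightarrow> m_proc v t n w = real (snd (w n)) + v (fst (w n)) - real n * t"
  by (cases n) (auto simp: less_Suc_eq_le)

lemma abs_le_Bv: "\<bar>(v::'q::finite \<Rightarrow> real) q\<bar> \<le> (\<Sum>q\<in>UNIV. \<bar>v q\<bar>)"
  by (rule member_le_sum) auto

lemma m_proc_bound:
  fixes v :: "'q::finite \<Rightarrow> real"
  shows "(\<forall>j\<le>n. snd (w j) \<le> c + j) \<Longrightarrow> \<bar>m_proc v t n w\<bar> \<le> real c + real n + (\<Sum>q\<in>UNIV. \<bar>v q\<bar>) + real n * \<bar>t\<bar>"
proof (induction n)
  case 0
  then have "snd (w 0) \<le> c" by simp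
  then show ?case using abs_le_Bv[of v "fst (w 0)"] by simp
next
  case (Suc i)
  then have IH: "\<bar>m_proc v t i w\<bar> \<le> real c + real i + (\<Sum>q\<in>UNIV. \<bar>v q\<bar>) + real i * \<bar>t\<bar>" by simp
  have b0: "snd (w (Suc i)) \<le> c + Suc i" using Suc.prems by blast
  have b: "real (snd (w (Suc i))) \<le> real c + real (Suc i)" using b0 by (metis of_nat_add of_nat_le_iff)
  have v: "\<bar>v (fst (w (Suc i)))\<bar> \<le> (\<Sum>q\<in>UNIV. \<bar>v q\<bar>)" by (rule abs_le_Bv)
  have tt: "\<bar>real (Suc i) * t\<bar> = real (Suc i) * \<bar>t\<bar>" by (simp add: abs_mult)
  have "real i * \<bar>t\<bar> \<le> real (Suc i) * \<bar>t\<bar>" by (intro mult_right_mono) auto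
  then show ?case using IH b v tt by (auto simp del: of_nat_Suc)
qed

definition hh :: "('q \<Rightarrow> real) \<Rightarrow> real \<Rightarrow> 'q \<times> nat \<Rightarrow> 'q \<times> nat \<Rightarrow> real" where
  "hh v t x y = (if snd y \<le> snd x + 1 \<and> snd x \<le> snd y + 1
     then real (snd y) - real (snd x) + v (fst y) - v (fst x) - t else 0)"

lemma hh_bound:
  fixes v :: "'q::finite \<Rightarrow> real"
  shows "\<bar>hh v t x y\<bar> \<le> 1 + 2 * (\<Sum>q\<in>UNIV. \<bar>v q\<bar>) + \<bar>t\<bar>"
proof -
  have a: "\<bar>v (fst y)\<bar> \<le> (\<Sum>q\<in>UNIV. \<bar>v q\<bar>)" "\<bar>v (fst x)\<bar> \<le> (\<Sum>q\<in>UNIV. \<bar>v q\<bar>)" by (rule abs_le_Bv)+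
  have "snd y \<le> snd x + 1 \<and> snd x \<le> snd y + 1 \<Longrightarrow> \<bar>real (snd y) - real (snd x)\<bar> \<le> 1" by linarith
  then show ?thesis using a unfolding hh_def by (auto simp: abs_le_iff)
qed

locale poc =
  fixes P0 Ppos :: "'q::finite \<Rightarrow> int \<Rightarrow> 'q \<Rightarrow> real" and x0 :: "'q \<times> nat"
  assumes pOC: "is_pOC P0 Ppos"
begin

abbreviation sp where "sp \<equiv> step_prob P0 Ppos"

lemma sp_nonneg: "0 \<le> sp x y"
  using pOC by (auto simp: is_pOC_def step_prob_def)

lemma sp_support: "sp x y \<noteq> 0 \<Longrightarrow> snd y \<le> snd x + 1 \<and> (1 \<le> snd x \<longrightarrow> snd x \<le> snd y + 1)"
proof -
  assume ne: "sp x y \<noteq> 0"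
  show ?thesis
  proof (cases "snd x = 0")
    case True
    then have "P0 (fst x) (int (snd y)) (fst y) \<noteq> 0" using ne by (simp add: step_prob_def)
    then have "int (snd y) \<in> {0,1}" using pOC unfolding is_pOC_def by blast
    then show ?thesis using True by auto
  next
    case False
    then have "Ppos (fst x) (int (snd y) - int (snd x)) (fst y) \<noteq> 0" using ne by (simp add: step_prob_def)
    then have "int (snd y) - int (snd x) \<in> {-1,0,1}" using pOC unfolding is_pOC_def by blast
    then show ?thesis by auto
  qed
qed

definition S :: "'q \<times> nat \<Rightarrow> ('q \<times> nat) set" where
  "S x = UNIV \<times> {snd x - 1 .. snd x + 1}"

lemma finite_S: "finite (S x)" by (simp add: S_def)

lemma sp_zero: "y \<notin> S x \<Longrightarrow> sp x y = 0"
proof (rule ccontr)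
  assume y: "y \<notin> S x" and "sp x y \<noteq> 0"
  then have "snd y \<le> snd x + 1 \<and> (1 \<le> snd x \<longrightarrow> snd x \<le> snd y + 1)" using sp_support by blast
  then have "snd y \<in> {snd x - 1 .. snd x + 1}" by (cases "snd x") auto
  then show False using y by (cases y) (auto simp: S_def)
qed

lemma sum_S0:
  assumes "snd x = 0"
  shows "(\<Sum>y\<in>S x. sp x y * g y) = (\<Sum>q\<in>UNIV. P0 (fst x) 0 q * g (q,0) + P0 (fst x) 1 q * g (q,1))"
proof -
  have "(\<Sum>y\<in>S x. sp x y * g y) = (\<Sum>q\<in>UNIV. \<Sum>b\<in>{0..1}. sp x (q,b) * g (q,b))"
    using assms by (simp add: S_def sum.cartesian_product')
  also have "\<dots> = (\<Sum>q\<in>UNIV. P0 (fst x) 0 q * g (q,0) + P0 (fst x) 1 q * g (q,1))"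
    using assms by (intro sum.cong refl) (simp add: step_prob_def)
  finally show ?thesis .
qed

lemma sum_S1:
  assumes "snd x = Suc k"
  shows "(\<Sum>y\<in>S x. sp x y * g y) = (\<Sum>q\<in>UNIV. Ppos (fst x) (-1) q * g (q,k) + Ppos (fst x) 0 q * g (q,Suc k)
      + Ppos (fst x) 1 q * g (q, Suc (Suc k)))"
proof -
  have e: "{snd x - 1 .. snd x + 1} = {k, Suc k, Suc (Suc k)}" using assms by auto
  have "(\<Sum>y\<in>S x. sp x y * g y) = (\<Sum>q\<in>UNIV. \<Sum>b\<in>{k, Suc k, Suc (Suc k)}. sp x (q,b) * g (q,b))"
    unfolding S_def e by (simp add: sum.cartesian_product')
  also have "\<dots> = (\<Sum>q\<in>UNIV. Ppos (fst x) (-1) q * g (q,k) + Ppos (fst x) 0 q * g (q,Suc k)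
      + Ppos (fst x) 1 q * g (q, Suc (Suc k)))"
    using assms by (intro sum.cong refl) (simp add: step_prob_def)
  finally show ?thesis .
qed

lemma sum_S_one: "(\<Sum>y\<in>S x. sp x y) = 1"
proof (cases "snd x")
  case 0
  have "(\<Sum>y\<in>S x. sp x y) = (\<Sum>y\<in>S x. sp x y * 1)" by simp
  also have "\<dots> = (\<Sum>q\<in>UNIV. P0 (fst x) 0 q + P0 (fst x) 1 q)" using sum_S0[OF 0, of "\<lambda>_. 1"] by simp
  also have "\<dots> = 1" using pOC unfolding is_pOC_def by (simp add: sum.distrib)
  finally show ?thesis .
next
  case (Suc k)
  have "(\<Sum>y\<in>S x. sp x y) = (\<Sum>y\<in>S x. sp x y * 1)" by simp
  also have "\<dots> = (\<Sum>q\<in>UNIV. Ppos (fst x) (-1) q + Ppos (fst x) 0 q + Ppos (fst x) 1 q)"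
    using sum_S1[OF Suc, of "\<lambda>_. 1"] by simp
  also have "\<dots> = 1" using pOC unfolding is_pOC_def by (simp add: sum.distrib add.assoc)
  finally show ?thesis .
qed

abbreviation K where "K \<equiv> run_kernel P0 Ppos x0"

lemma emeasure_step: "emeasure (density (count_space UNIV) (\<lambda>y. ennreal (sp x y))) UNIV = 1"
proof -
  have "emeasure (density (count_space UNIV) (\<lambda>y. ennreal (sp x y))) UNIV
      = (\<integral>\<^sup>+y. ennreal (sp x y) \<partial>count_space UNIV)"
    by (simp add: emeasure_density)
  also have "\<dots> = (\<Sum>y\<in>S x. ennreal (sp x y))"
    by (rule nn_integral_count_space') (auto simp: finite_S sp_zero)
  also have "\<dots> = ennreal (\<Sum>y\<in>S x. sp x y)"
    by (rule sum_ennreal) (simp add: sp_nonneg)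
  finally show ?thesis by (simp add: sum_S_one)
qed

lemma sum_S_potential:
  assumes pot: "is_potential Ppos t v" and x: "snd x = Suc k"
  shows "(\<Sum>y\<in>S x. sp x y * (real (snd y) - real (snd x) + v (fst y) - v (fst x) - t)) = 0"
proof -
  define p where "p = fst x"
  define a where "a q = Ppos p (-1) q" for q
  define b where "b q = Ppos p 0 q" for q
  define c where "c q = Ppos p 1 q" for q
  have one: "(\<Sum>q\<in>UNIV. a q) + (\<Sum>q\<in>UNIV. b q) + (\<Sum>q\<in>UNIV. c q) = 1"
    using pOC unfolding is_pOC_def a_def b_def c_def by (simp add: add.assoc)
  have dr: "drift Ppos p = (\<Sum>q\<in>UNIV. c q) - (\<Sum>q\<in>UNIV. a q)"
    by (simp add: drift_def a_def c_def sum_negf)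
  have tm: "trans_matrix Ppos p q = a q + b q + c q" for q
    by (simp add: trans_matrix_def a_def b_def c_def add.assoc)
  have P: "drift Ppos p + (\<Sum>q\<in>UNIV. (a q + b q + c q) * v q) = v p + t"
    using pot unfolding is_potential_def tm[symmetric] by blast
  have "(\<Sum>y\<in>S x. sp x y * (real (snd y) - real (snd x) + v (fst y) - v (fst x) - t))
     = (\<Sum>q\<in>UNIV. a q * (real k - real (Suc k) + v q - v p - t) + b q * (real (Suc k) - real (Suc k) + v q - v p - t)
      + c q * (real (Suc (Suc k)) - real (Suc k) + v q - v p - t))"
    unfolding sum_S1[OF x] by (simp add: x a_def b_def c_def p_def)
  also have "\<dots> = (\<Sum>q\<in>UNIV. (c q - a q) + (a q + b q + c q) * v q - (v p + t) * (a q + b q + c q))"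
    by (intro sum.cong refl) (simp add: algebra_simps)
  also have "\<dots> = ((\<Sum>q\<in>UNIV. c q) - (\<Sum>q\<in>UNIV. a q)) + (\<Sum>q\<in>UNIV. (a q + b q + c q) * v q)
      - (v p + t) * ((\<Sum>q\<in>UNIV. a q) + (\<Sum>q\<in>UNIV. b q) + (\<Sum>q\<in>UNIV. c q))"
    by (simp add: sum.distrib sum_subtractf sum_distrib_left[symmetric])
  also have "\<dots> = 0" using P one dr by simp
  finally show ?thesis .
qed

lemma prob_step: "prob_space (density (count_space UNIV) (\<lambda>y. ennreal (sp x y)))"
  by (rule prob_spaceI) (simp add: emeasure_step)

lemma K_prob: "prob_space (K i \<omega>)"
  by (simp add: run_kernel_def prob_step prob_space_return)

lemma K_sets: "sets (K i \<omega>) = sets (count_space UNIV)"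
  by (simp add: run_kernel_def)

lemma K_meas: "K i \<in> measurable (PiM {0..<i} (\<lambda>_. count_space UNIV)) (subprob_algebra (count_space UNIV))"
proof (rule measurable_PiM_count_finite)
  show "K i \<in> PiE {0..<i} (\<lambda>_. UNIV) \<rightarrow> space (subprob_algebra (count_space UNIV))"
  proof
    fix \<omega> show "K i \<omega> \<in> space (subprob_algebra (count_space UNIV))"
      unfolding space_subprob_algebra using K_sets[of i \<omega>] prob_space_imp_subprob_space[OF K_prob[of i \<omega>]]
      by blast
  qed
qed simp

sublocale IT: Ionescu_Tulcea "run_kernel P0 Ppos x0" "\<lambda>_. count_space UNIV"
  unfolding Ionescu_Tulcea_def using K_meas K_prob by blast

abbreviation R where "R \<equiv> run_measure P0 Ppos x0"

lemma R_eq: "R = IT.PF.lim"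
  by (simp add: run_measure_def)

abbreviation MM :: "nat \<Rightarrow> ('q \<times> nat) measure" where "MM \<equiv> \<lambda>_. count_space UNIV"

lemma up_to_Ico: "IT.up_to {0..<N} = N"
proof (rule antisym)
  show "IT.up_to {0..<N} \<le> N" by (simp add: IT.up_to_iff)
  show "N \<le> IT.up_to {0..<N}"
  proof (cases N)
    case (Suc n) then show ?thesis using IT.up_to_less[of "{0..<N}" n] by simp
  qed simp
qed

lemma sets_R: "sets R = sets (PiM UNIV MM)"
  by (simp add: R_eq)

lemma space_R: "space R = UNIV"
  by (simp add: R_eq space_PiM)

lemma meas_restrict_R[measurable]: "(\<lambda>w. restrict w J) \<in> measurable R (PiM J MM)"
  by (subst measurable_cong_sets[OF sets_R refl]) (rule measurable_restrict_subset, simp)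

lemma prob_R: "prob_space R"
proof (rule prob_spaceI)
  have "emeasure R (space R) = emeasure (distr R (PiM {} MM) (\<lambda>w. restrict w {})) (space (PiM {} MM))"
  proof -
    have "(\<lambda>w. restrict w {}) -` space (PiM {} MM) \<inter> space R = space R" by (auto simp: space_PiM)
    then show ?thesis by (simp add: emeasure_distr[OF meas_restrict_R sets.top])
  qed
  also have "\<dots> = emeasure (IT.CI {}) (space (IT.CI {}))"
    unfolding R_eq by (subst IT.distr_lim) (auto simp: IT.PF.space_P space_PiM)
  also have "\<dots> = 1" using IT.PF.prob_space_P[of "{}"] by (simp add: prob_space.emeasure_space_1)
  finally show "emeasure R (space R) = 1" .
qed

lemma undef_space: "(\<lambda>_. undefined) \<in> space (PiM {0..<0} MM)"
  by (simp add: space_PiM)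

lemma distr_R: "distr R (PiM {0..<N} MM) (\<lambda>w. restrict w {0..<N})
   = distr (IT.C 0 N (\<lambda>_. undefined)) (PiM {0..<N} MM) (\<lambda>w. restrict w {0..<N})"
  unfolding R_eq by (simp add: IT.distr_lim IT.CI_def up_to_Ico)

lemma meas_restrict_C: "(\<lambda>w. restrict w {0..<N}) \<in> measurable (IT.C 0 N (\<lambda>_. undefined)) (PiM {0..<N} MM)"
  using IT.sets_C[OF undef_space, of N]
  by (subst measurable_cong_sets[OF _ refl]) (auto intro: measurable_restrict_subset)

lemma space_C: "space (IT.C 0 N (\<lambda>_. undefined)) = PiE {0..<N} (\<lambda>_. UNIV)"
  using IT.space_C[OF undef_space, of N] by (simp add: space_PiM)

lemma meas_fun_upd: "\<omega> \<in> PiE {0..<N} (\<lambda>_. UNIV) \<Longrightarrow> fun_upd \<omega> N \<in> measurable (K N \<omega>) (PiM {0..<Suc N} MM)"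
  by (subst measurable_cong_sets[OF K_sets refl]) (auto simp: space_PiM PiE_iff extensional_def)

lemma eP_meas: "IT.eP N \<in> measurable (IT.C 0 N (\<lambda>_. undefined)) (subprob_algebra (PiM {0..<Suc N} MM))"
  using IT.sets_C[OF undef_space, of N]
  by (subst measurable_cong_sets[OF _ refl]) (auto intro: IT.measurable_eP)

lemma INT:
  fixes g :: "(nat \<Rightarrow> 'q \<times> nat) \<Rightarrow> real"
  assumes bound: "\<And>\<omega>. \<bar>g \<omega>\<bar> \<le> B"
  shows "(\<integral>w. g (restrict w {0..<Suc N}) \<partial>R) = (\<integral>\<omega>. (\<integral>y. g (fun_upd \<omega> N y) \<partial>K N \<omega>) \<partial>IT.C 0 N (\<lambda>_. undefined))"
proof -
  have gm: "g \<in> borel_measurable (PiM {0..<Suc N} MM)" by simp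
  have "(\<integral>w. g (restrict w {0..<Suc N}) \<partial>R) = integral\<^sup>L (distr R (PiM {0..<Suc N} MM) (\<lambda>w. restrict w {0..<Suc N})) g"
    by (rule integral_distr[symmetric, OF meas_restrict_R gm])
  also have "\<dots> = integral\<^sup>L (distr (IT.C 0 (Suc N) (\<lambda>_. undefined)) (PiM {0..<Suc N} MM) (\<lambda>w. restrict w {0..<Suc N})) g"
    by (simp add: distr_R)
  also have "\<dots> = (\<integral>\<omega>. g (restrict \<omega> {0..<Suc N}) \<partial>IT.C 0 (Suc N) (\<lambda>_. undefined))"
    by (rule integral_distr[OF meas_restrict_C gm])
  also have "\<dots> = (\<integral>\<omega>. g \<omega> \<partial>IT.C 0 (Suc N) (\<lambda>_. undefined))"
    by (rule Bochner_Integration.integral_cong[OF refl]) (simp only: space_C PiE_restrict)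
  also have "\<dots> = (\<integral>\<omega>. g \<omega> \<partial>(IT.C 0 N (\<lambda>_. undefined) \<bind> IT.eP N))"
    by simp
  also have "\<dots> = (\<integral>\<omega>. integral\<^sup>L (IT.eP N \<omega>) g \<partial>IT.C 0 N (\<lambda>_. undefined))"
  proof (rule integral_bind[OF gm])
    show "\<And>x. x \<in> space (PiM {0..<Suc N} MM) \<Longrightarrow> \<bar>g x\<bar> \<le> B" using bound by auto
    show "IT.eP N \<in> measurable (IT.C 0 N (\<lambda>_. undefined)) (subprob_algebra (PiM {0..<Suc N} MM))"
      using IT.sets_C[OF undef_space, of N]
      by (subst measurable_cong_sets[OF _ refl]) (auto intro: IT.measurable_eP)
    show "finite_measure (IT.C 0 N (\<lambda>_. undefined))"
      using IT.prob_space_C[OF undef_space] by (simp add: prob_space.finite_measure)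
    show "AE x in IT.C 0 N (\<lambda>_. undefined). emeasure (IT.eP N x) (space (IT.eP N x)) \<le> ennreal 1"
    proof (rule AE_I2)
      fix x assume "x \<in> space (IT.C 0 N (\<lambda>_. undefined))"
      then have "x \<in> space (PiM {0..<N} MM)" by (simp add: space_C space_PiM)
      then show "emeasure (IT.eP N x) (space (IT.eP N x)) \<le> ennreal 1"
        using prob_space.emeasure_space_1[OF IT.prob_space_eP] by simp
    qed
  qed
  also have "\<dots> = (\<integral>\<omega>. (\<integral>y. g (fun_upd \<omega> N y) \<partial>K N \<omega>) \<partial>IT.C 0 N (\<lambda>_. undefined))"
  proof (rule Bochner_Integration.integral_cong[OF refl])
    fix \<omega> assume "\<omega> \<in> space (IT.C 0 N (\<lambda>_. undefined))"
    then have w: "\<omega> \<in> PiE {0..<N} (\<lambda>_. UNIV)" by (simp add: space_C)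
    show "integral\<^sup>L (IT.eP N \<omega>) g = (\<integral>y. g (fun_upd \<omega> N y) \<partial>K N \<omega>)"
      unfolding IT.eP_def by (rule integral_distr[OF meas_fun_upd[OF w] gm])
  qed
  finally show ?thesis .
qed

lemma AEK:
  assumes H: "\<And>\<omega>. \<omega> \<in> PiE {0..<N} (\<lambda>_. UNIV) \<Longrightarrow> AE y in K N \<omega>. Q (fun_upd \<omega> N y)"
  shows "AE w in R. Q (restrict w {0..<Suc N})"
proof -
  have pr: "Measurable.pred (PiM {0..<Suc N} MM) Q" by (rule pred_PiM_count_finite) simp
  have "AE \<omega> in IT.C 0 N (\<lambda>_. undefined). AE y in IT.eP N \<omega>. Q y"
  proof (rule AE_I2)
    fix \<omega> assume "\<omega> \<in> space (IT.C 0 N (\<lambda>_. undefined))"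
    then have w: "\<omega> \<in> PiE {0..<N} (\<lambda>_. UNIV)" by (simp add: space_C)
    show "AE y in IT.eP N \<omega>. Q y"
      unfolding IT.eP_def
      by (subst AE_distr_iff[OF meas_fun_upd[OF w] set_PiM_count_finite]) (fact finite_atLeastLessThan, rule H[OF w])
  qed
  then have "AE \<omega> in IT.C 0 N (\<lambda>_. undefined) \<bind> IT.eP N. Q \<omega>"
    by (simp only: AE_bind[OF eP_meas pr])
  then have "AE \<omega> in IT.C 0 (Suc N) (\<lambda>_. undefined). Q \<omega>" by (simp only: IT.C.simps add_0)
  then have "AE \<omega> in IT.C 0 (Suc N) (\<lambda>_. undefined). Q (restrict \<omega> {0..<Suc N})"
  proof (rule AE_mp[OF _ AE_I2])
    fix x assume "x \<in> space (IT.C 0 (Suc N) (\<lambda>_. undefined))"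
    then have "x \<in> PiE {0..<Suc N} (\<lambda>_. UNIV)" by (simp only: space_C)
    then show "Q x \<longrightarrow> Q (restrict x {0..<Suc N})" by simp
  qed
  then have "AE \<omega> in distr (IT.C 0 (Suc N) (\<lambda>_. undefined)) (PiM {0..<Suc N} MM) (\<lambda>w. restrict w {0..<Suc N}). Q \<omega>"
    by (subst AE_distr_iff[OF meas_restrict_C set_PiM_count_finite]) auto
  then have "AE \<omega> in distr R (PiM {0..<Suc N} MM) (\<lambda>w. restrict w {0..<Suc N}). Q \<omega>"
    by (simp only: distr_R)
  then show ?thesis by (rule AE_distrD[OF meas_restrict_R])
qed

lemma K_0: "K 0 \<omega> = return (count_space UNIV) x0"
  by (simp add: run_kernel_def)

lemma sp_support': "0 < sp x y \<Longrightarrow> snd y \<le> snd x + 1 \<and> (1 \<le> snd x \<longrightarrow> snd x \<le> snd y + 1)"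
  by (rule sp_support) simp

lemma AE0: "AE w in R. w 0 = x0"
proof -
  have "AE w in R. (\<lambda>\<omega>. \<omega> 0 = x0) (restrict w {0..<Suc 0})"
  proof (rule AEK)
    fix \<omega> :: "nat \<Rightarrow> 'q \<times> nat"
    show "AE y in K 0 \<omega>. (\<lambda>\<omega>. \<omega> 0 = x0) (fun_upd \<omega> 0 y)"
      unfolding K_0 by (subst AE_return) auto
  qed
  then show ?thesis by simp
qed

lemma K_Suc: "K (Suc j) \<omega> = density (count_space UNIV) (\<lambda>y. ennreal (sp (\<omega> j) y))"
  by (simp add: run_kernel_def)

lemma AE1: "AE w in R. snd (w (Suc j)) \<le> snd (w j) + 1 \<and> (1 \<le> snd (w j) \<longrightarrow> snd (w j) \<le> snd (w (Suc j)) + 1)"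
proof -
  have "AE w in R. (\<lambda>\<omega>. snd (\<omega> (Suc j)) \<le> snd (\<omega> j) + 1 \<and> (1 \<le> snd (\<omega> j) \<longrightarrow> snd (\<omega> j) \<le> snd (\<omega> (Suc j)) + 1))
       (restrict w {0..<Suc (Suc j)})"
  proof (rule AEK)
    fix \<omega> :: "nat \<Rightarrow> 'q \<times> nat"
    show "AE y in K (Suc j) \<omega>. (\<lambda>\<omega>. snd (\<omega> (Suc j)) \<le> snd (\<omega> j) + 1 \<and> (1 \<le> snd (\<omega> j) \<longrightarrow> snd (\<omega> j) \<le> snd (\<omega> (Suc j)) + 1))
       (fun_upd \<omega> (Suc j) y)"
      unfolding K_Suc
      by (subst AE_density) (auto simp: AE_count_space dest!: sp_support')
  qed
  then show ?thesis by simp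
qed

lemma AE_all: "AE w in R. w 0 = x0 \<and> (\<forall>j. snd (w (Suc j)) \<le> snd (w j) + 1 \<and> (1 \<le> snd (w j) \<longrightarrow> snd (w j) \<le> snd (w (Suc j)) + 1))"
  using AE0 AE1 by (simp add: AE_all_countable)

lemma AE_bound: "AE w in R. \<forall>j. snd (w j) \<le> snd x0 + j"
proof -
  { fix w :: "nat \<Rightarrow> 'q \<times> nat"
    assume H: "w 0 = x0 \<and> (\<forall>j. snd (w (Suc j)) \<le> snd (w j) + 1 \<and> (1 \<le> snd (w j) \<longrightarrow> snd (w j) \<le> snd (w (Suc j)) + 1))"
    have "snd (w j) \<le> snd x0 + j" for j
    proof (induction j)
      case 0 then show ?case using H by simp
    next
      case (Suc j) then show ?case using H[THEN conjunct2, rule_format, of j] by simp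
    qed }
  note * = this
  show ?thesis using AE_all by (rule eventually_mono) (use * in blast)
qed

lemma int_hh:
  assumes pot: "is_potential Ppos t v" and x: "1 \<le> snd x"
  shows "(\<integral>y. hh v t x y \<partial>density (count_space UNIV) (\<lambda>y. ennreal (sp x y))) = 0"
proof -
  obtain k where k: "snd x = Suc k" using x by (cases "snd x") auto
  have "(\<integral>y. hh v t x y \<partial>density (count_space UNIV) (\<lambda>y. ennreal (sp x y)))
      = (\<integral>y. sp x y * hh v t x y \<partial>count_space UNIV)"
    by (subst integral_density) (auto simp: sp_nonneg)
  also have "\<dots> = (\<Sum>y\<in>S x. sp x y * hh v t x y)"
    by (rule integral_count_space_superset[OF finite_S]) (simp add: sp_zero)
  also have "\<dots> = (\<Sum>y\<in>S x. sp x y * (real (snd y) - real (snd x) + v (fst y) - v (fst x) - t))"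
    by (intro sum.cong refl) (auto simp: hh_def S_def k)
  also have "\<dots> = 0" by (rule sum_S_potential[OF pot k])
  finally show ?thesis .
qed

definition G :: "('q \<Rightarrow> real) \<Rightarrow> real \<Rightarrow> nat \<Rightarrow> (nat \<Rightarrow> 'q \<times> nat) \<Rightarrow> real" where
  "G v t n w = (if \<forall>j\<le>n. 1 \<le> snd (w j) then hh v t (w n) (w (Suc n)) else 0)"

lemma zero_int:
  assumes pot: "is_potential Ppos t v"
  shows "(\<integral>w. indicator B (restrict w {0..n}) * G v t n w \<partial>R) = 0"
proof -
  define g where "g \<omega> = indicator B (restrict \<omega> {0..n}) *
     (if \<forall>j\<le>n. 1 \<le> snd (\<omega> j) then hh v t (\<omega> n) (\<omega> (Suc n)) else 0)" for \<omega> :: "nat \<Rightarrow> 'q \<times> nat"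
  have i: "{0..<Suc (Suc n)} \<inter> {0..n} = {0..n}" by auto
  have eq: "indicator B (restrict w {0..n}) * G v t n w = g (restrict w {0..<Suc (Suc n)})" for w
  proof -
    have c: "(\<forall>j\<le>n. 1 \<le> snd (restrict w {0..<Suc (Suc n)} j)) = (\<forall>j\<le>n. 1 \<le> snd (w j))" by auto
    show ?thesis unfolding g_def G_def restrict_restrict i c by auto
  qed
  have bd: "\<bar>g \<omega>\<bar> \<le> 1 + 2 * (\<Sum>q\<in>UNIV. \<bar>v q\<bar>) + \<bar>t\<bar>" for \<omega>
    using hh_bound[of v t] unfolding g_def by (auto simp: indicator_def)
  have inner: "(\<integral>y. g (fun_upd \<omega> (Suc n) y) \<partial>K (Suc n) \<omega>) = 0" for \<omega>
  proof -
    have r: "restrict (fun_upd \<omega> (Suc n) y) {0..n} = restrict \<omega> {0..n}" for y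
      by (auto simp: fun_eq_iff restrict_def)
    have gg: "g (fun_upd \<omega> (Suc n) y) = indicator B (restrict \<omega> {0..n}) *
       (if \<forall>j\<le>n. 1 \<le> snd (\<omega> j) then hh v t (\<omega> n) y else 0)" for y
      unfolding g_def r by auto
    show ?thesis
    proof (cases "\<forall>j\<le>n. 1 \<le> snd (\<omega> j)")
      case True
      then have "1 \<le> snd (\<omega> n)" by simp
      then show ?thesis unfolding gg using True by (simp add: K_Suc int_hh[OF pot])
    next
      case False then show ?thesis unfolding gg if_not_P[OF False] by simp
    qed
  qed
  have "(\<integral>w. indicator B (restrict w {0..n}) * G v t n w \<partial>R) = (\<integral>w. g (restrict w {0..<Suc (Suc n)}) \<partial>R)"
    unfolding eq ..
  also have "\<dots> = (\<integral>\<omega>. (\<integral>y. g (fun_upd \<omega> (Suc n) y) \<partial>K (Suc n) \<omega>) \<partial>IT.C 0 (Suc n) (\<lambda>_. undefined))"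
    by (rule INT[OF bd])
  also have "\<dots> = 0" unfolding inner by simp
  finally show ?thesis .
qed

lemma meas_R_fin: "finite J \<Longrightarrow> (\<lambda>w. (f::(nat \<Rightarrow> 'q\<times>nat) \<Rightarrow> real) (restrict w J)) \<in> borel_measurable R"
  by (rule measurable_compose[OF meas_restrict_R borel_PiM_count_finite])

lemma m_meas_R: "m_proc v t n \<in> borel_measurable R"
proof -
  have "m_proc v t n = (\<lambda>w. m_proc v t n (restrict w {0..n}))" by (simp add: m_proc_restrict fun_eq_iff)
  then show ?thesis using meas_R_fin[of "{0..n}" "m_proc v t n"] by simp
qed

lemma G_meas_R: "G v t n \<in> borel_measurable R"
proof -
  have "G v t n = (\<lambda>w. G v t n (restrict w {0..Suc n}))" by (auto simp: G_def fun_eq_iff)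
  then show ?thesis using meas_R_fin[of "{0..Suc n}" "G v t n"] by simp
qed

lemma sets_F: "sets (run_filtration R n) = {(\<lambda>w. restrict w {0..n}) -` A \<inter> space R | A. A \<in> sets (PiM {0..n} MM)}"
  unfolding run_filtration_def by (rule sets_vimage_algebra2) (auto simp: space_PiM)

lemma step_AE:
  assumes H: "snd (w (Suc n)) \<le> snd (w n) + 1 \<and> (1 \<le> snd (w n) \<longrightarrow> snd (w n) \<le> snd (w (Suc n)) + 1)"
  shows "m_proc v t (Suc n) w = m_proc v t n w + G v t n w"
proof (cases "\<forall>j\<le>n. 1 \<le> snd (w j)")
  case True
  then have a: "m_proc v t n w = real (snd (w n)) + v (fst (w n)) - real n * t"
    by (intro m_proc_active) auto
  have "1 \<le> snd (w n)" using True by simp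
  then have c: "snd (w (Suc n)) \<le> snd (w n) + 1 \<and> snd (w n) \<le> snd (w (Suc n)) + 1" using H by simp
  have g: "G v t n w = real (snd (w (Suc n))) - real (snd (w n)) + v (fst (w (Suc n))) - v (fst (w n)) - t"
    using True c by (simp add: G_def hh_def)
  show ?thesis using True by (simp add: a g algebra_simps)
next
  case False
  have "m_proc v t (Suc n) w = m_proc v t n w" by (simp only: m_proc.simps if_not_P[OF False])
  moreover have "G v t n w = 0" by (simp only: G_def if_not_P[OF False])
  ultimately show ?thesis by simp
qed

lemma mart:
  assumes pot: "is_potential Ppos t v"
  shows "martingale R (run_filtration R) (\<lambda>i. m_proc v t i)"
  unfolding martingale_def
proof (intro conjI allI)
  interpret P: prob_space R by (rule prob_R)
  fix n
  show sub: "subalgebra R (run_filtration R n)"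
    unfolding subalgebra_def
  proof
    show "sets (run_filtration R n) \<subseteq> sets R"
      unfolding sets_F using measurable_sets[OF meas_restrict_R] by auto
    show "space (run_filtration R n) = space R" by (simp add: run_filtration_def)
  qed
  show "sets (run_filtration R n) \<subseteq> sets (run_filtration R (Suc n))"
  proof
    fix X assume "X \<in> sets (run_filtration R n)"
    then obtain A where A: "A \<in> sets (PiM {0..n} MM)" and X: "X = (\<lambda>w. restrict w {0..n}) -` A \<inter> space R"
      unfolding sets_F by auto
    define A' where "A' = (\<lambda>\<omega>. restrict \<omega> {0..n}) -` A \<inter> space (PiM {0..Suc n} MM)"
    have A': "A' \<in> sets (PiM {0..Suc n} MM)"
      unfolding A'_def by (rule measurable_sets[OF measurable_restrict_subset A]) auto
    have rr: "restrict (restrict w {0..Suc n}) {0..n} = restrict w {0..n}" for w :: "nat \<Rightarrow> 'q \<times> nat"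
      by (auto simp: restrict_def fun_eq_iff)
    have "X = (\<lambda>w. restrict w {0..Suc n}) -` A' \<inter> space R"
      unfolding X A'_def by (auto simp: rr space_PiM)
    then show "X \<in> sets (run_filtration R (Suc n))" unfolding sets_F using A' by blast
  qed
  show "m_proc v t n \<in> borel_measurable (run_filtration R n)"
  proof -
    have "(\<lambda>w. m_proc v t n (restrict w {0..n})) \<in> borel_measurable (run_filtration R n)"
      unfolding run_filtration_def
      by (rule measurable_compose[OF measurable_vimage_algebra1 borel_PiM_count_finite]) (auto simp: space_PiM)
    then show ?thesis by (simp add: m_proc_restrict)
  qed
  have intg: "integrable R (m_proc v t k)" for k
  proof (rule P.integrable_const_bound[OF _ m_meas_R])
    show "AE x in R. norm (m_proc v t k x) \<le> real (snd x0) + real k + (\<Sum>q\<in>UNIV. \<bar>v q\<bar>) + real k * \<bar>t\<bar>"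
      using AE_bound by (rule eventually_mono) (auto intro!: m_proc_bound)
  qed
  show "integrable R (m_proc v t n)" by (rule intg)
  interpret S: finite_measure_subalgebra R "run_filtration R n"
    by unfold_locales (rule sub)
  show "AE w in R. real_cond_exp R (run_filtration R n) (m_proc v t (Suc n)) w = m_proc v t n w"
  proof (rule S.real_cond_exp_charact)
    show "integrable R (m_proc v t (Suc n))" "integrable R (m_proc v t n)" by (rule intg)+
    show "m_proc v t n \<in> borel_measurable (run_filtration R n)" by fact
    fix X assume "X \<in> sets (run_filtration R n)"
    then obtain A where A: "A \<in> sets (PiM {0..n} MM)" and X: "X = (\<lambda>w. restrict w {0..n}) -` A \<inter> space R"
      unfolding sets_F by auto
    have ind: "indicator X w = indicator A (restrict w {0..n})" for w :: "nat \<Rightarrow> 'q \<times> nat"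
      unfolding X by (simp add: space_R indicator_def)
    have Xs: "X \<in> sets R" using \<open>X \<in> sets (run_filtration R n)\<close> sub by (auto simp: subalgebra_def)
    have Gi: "integrable R (\<lambda>w. indicator A (restrict w {0..n}) * G v t n w)"
    proof (rule P.integrable_const_bound)
      show "AE x in R. norm (indicator A (restrict x {0..n}) * G v t n x) \<le> 1 + 2 * (\<Sum>q\<in>UNIV. \<bar>v q\<bar>) + \<bar>t\<bar>"
        using hh_bound[of v t] by (auto simp: G_def indicator_def intro!: AE_I2)
      show "(\<lambda>w. indicator A (restrict w {0..n}) * G v t n w) \<in> borel_measurable R"
        using G_meas_R meas_R_fin[of "{0..n}" "indicator A"] by measurable
    qed
    have mi: "integrable R (\<lambda>w. indicator A (restrict w {0..n}) * m_proc v t n w)"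
      using integrable_mult_indicator[OF Xs intg[of n]] unfolding ind by simp
    have "(\<integral>w. indicator X w *\<^sub>R m_proc v t (Suc n) w \<partial>R)
        = (\<integral>w. indicator A (restrict w {0..n}) * m_proc v t n w + indicator A (restrict w {0..n}) * G v t n w \<partial>R)"
    proof (rule integral_cong_AE)
      show "(\<lambda>w. indicator X w *\<^sub>R m_proc v t (Suc n) w) \<in> borel_measurable R"
        using Xs m_meas_R by measurable
      show "(\<lambda>w. indicator A (restrict w {0..n}) * m_proc v t n w + indicator A (restrict w {0..n}) * G v t n w) \<in> borel_measurable R"
        using G_meas_R m_meas_R meas_R_fin[of "{0..n}" "indicator A"] by measurable
      show "AE w in R. indicator X w *\<^sub>R m_proc v t (Suc n) w
          = indicator A (restrict w {0..n}) * m_proc v t n w + indicator A (restrict w {0..n}) * G v t n w"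
        using AE1[of n]
      proof (rule eventually_mono)
        fix w :: "nat \<Rightarrow> 'q \<times> nat" assume H: "snd (w (Suc n)) \<le> snd (w n) + 1 \<and> (1 \<le> snd (w n) \<longrightarrow> snd (w n) \<le> snd (w (Suc n)) + 1)"
        show "indicator X w *\<^sub>R m_proc v t (Suc n) w
          = indicator A (restrict w {0..n}) * m_proc v t n w + indicator A (restrict w {0..n}) * G v t n w"
          unfolding step_AE[OF H] ind by (simp add: algebra_simps)
      qed
    qed
    also have "\<dots> = (\<integral>w. indicator A (restrict w {0..n}) * m_proc v t n w \<partial>R)
        + (\<integral>w. indicator A (restrict w {0..n}) * G v t n w \<partial>R)"
      by (rule Bochner_Integration.integral_add[OF mi Gi])
    also have "\<dots> = (\<integral>w. indicator X w *\<^sub>R m_proc v t n w \<partial>R)"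
      by (simp add: zero_int[OF pot] ind)
    finally show "(\<integral>w\<in>X. m_proc v t (Suc n) w \<partial>R) = (\<integral>w\<in>X. m_proc v t n w \<partial>R)"
      unfolding set_lebesgue_integral_def .
  qed
qed

end

theorem mainTheorem10:
  fixes P0 Ppos :: "'q::finite \<Rightarrow> int \<Rightarrow> 'q \<Rightarrow> real"
    and \<alpha> v :: "'q \<Rightarrow> real"
    and r :: 'q and c :: nat
  assumes "is_pOC P0 Ppos"
    and "strongly_connected (trans_matrix Ppos)"
    and "invariant_distribution (trans_matrix Ppos) \<alpha>"
    and "is_potential Ppos (trend Ppos \<alpha>) v"
  shows "martingale (run_measure P0 Ppos (r, c))
           (run_filtration (run_measure P0 Ppos (r, c)))
           (\<lambda>i. m_proc v (trend Ppos \<alpha>) i)"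
proof -
  interpret poc P0 Ppos "(r, c)" by unfold_locales (rule assms(1))
  show ?thesis by (rule mart[OF assms(4)])
qed

end
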